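(* For every finite set $J$, the signatures $\mathrm{Even}_J$, $\mathrm{Odd}_J$ and $\mathrm{NAE}_J$ are strictly terraced. Moreover $\mathrm{Prat}(\mathrm{Even}_J)=\mathrm{Prat}(\mathrm{Odd}_J)=0$ and $\mathrm{Prat}(\mathrm{NAE}_J)\le3$.
   Context: $\mathrm{Even}_J(x)=1$ iff $\sum_ix_i$ is even; $\mathrm{Odd}_J(x)=1$ iff $\sum_ix_i$ is odd; $\mathrm{NAE}_J(x)=1$ iff $1\le\sum_ix_i\le|J|-1$ (each $0$ otherwise). Parity relations are the signatures $\mathrm{Even}_K$, $\mathrm{Odd}_K$ (and their copies). $e_i$ is the characteristic vector of $\{i\}$ and $\oplus$ is coordinatewise addition mod 2. A signature $F:\{0,1\}^J\to\mathbb{Q}_{\ge0}$ is strictly terraced if for all $x$ and $i,j\in J$, $F(x)=0$ implies $F(x\oplus e_i)=F(x\oplus e_j)$. A circuit $\phi$: finite set $J$ of incidences, vertices $V$ with sets $J_v$ partitioning $J$, external edges $A\subseteq J$, a partition $E$ of $J\setminus A$ into pairs, constraints $F_v:\{0,1\}^{J_v}\to\mathbb{Q}_{\ge0}$; assignments are $x$ with $x_i=x_j$ for $\{i,j\}\in E$; $[\![\phi]\!](x)=\sum_{x'}\prod_vF_v(x'|_{J_v})$ over assignments $x'$ extending $x\in\{0,1\}^A$. A copy of $F:\{0,1\}^I\to\mathbb{Q}_{\ge0}$ is $x\mapsto F(x\circ\pi)$ for a bijection $\pi$. For $F$ not identically zero, a parity-signature of $F$ is a positive constant multiple of $[\![\phi]\!]$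 for a circuit $\phi$ with exactly one constraint a copy of $F$ and all other constraints copies of parity relations. $\mathrm{Prat}(F)=\max\{F'(0)/F'(1)\}$ over parity-signatures $F':\{0,1\}\to\mathbb{Q}_{\ge0}$ of $F$ (one external edge) with $F'(1)>0$; $\mathrm{Prat}(F)=0$ if $F$ is identically zero. *)

theory Defs
  imports "HOL-Analysis.Analysis"
begin

text \<open>An assignment x in {0,1}^J is represented by its support, a subset of J
  (the set of coordinates equal to 1); so sum_i x_i = card x, and x XOR e_i is flip x i.\<close>

definition flip :: "'a set \<Rightarrow> 'a \<Rightarrow> 'a set" where
  "flip x i = (if i \<in> x then x - {i} else insert i x)"

definition even_rel :: "'a set \<Rightarrow> 'a set \<Rightarrow> rat" where
  "even_rel J x = (if even (card (x \<inter> J)) then 1 else 0)"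

definition odd_rel :: "'a set \<Rightarrow> 'a set \<Rightarrow> rat" where
  "odd_rel J x = (if odd (card (x \<inter> J)) then 1 else 0)"

definition nae_rel :: "'a set \<Rightarrow> 'a set \<Rightarrow> rat" where
  "nae_rel J x = (if 1 \<le> card (x \<inter> J) \<and> card (x \<inter> J) + 1 \<le> card J then 1 else 0)"

definition strictly_terraced :: "'a set \<Rightarrow> ('a set \<Rightarrow> rat) \<Rightarrow> bool" where
  "strictly_terraced J F \<longleftrightarrow>
     (\<forall>x i j. x \<subseteq> J \<longrightarrow> i \<in> J \<longrightarrow> j \<in> J \<longrightarrow> F x = 0 \<longrightarrow> F (flip x i) = F (flip x j))"

definition is_copy :: "'a set \<Rightarrow> ('a set \<Rightarrow> rat) \<Rightarrow> 'b set \<Rightarrow> ('b set \<Rightarrow> rat) \<Rightarrow> bool" where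
  "is_copy I F K G \<longleftrightarrow> (\<exists>\<pi>. bij_betw \<pi> I K \<and> (\<forall>y. y \<subseteq> K \<longrightarrow> G y = F (I \<inter> \<pi> -` y)))"

text \<open>Circuits: incidences Jc, vertices V with incidence sets Jv v partitioning Jc,
  external edges A, internal edges E (a partition of Jc - A into pairs), constraints Fv v.
  Incidences and vertices are taken from nat (every finite circuit is isomorphic to one of these).\<close>
definition is_circuit :: "nat set \<Rightarrow> nat set \<Rightarrow> (nat \<Rightarrow> nat set) \<Rightarrow> nat set \<Rightarrow> nat set set \<Rightarrow> bool" where
  "is_circuit Jc V Jv A E \<longleftrightarrow>
     finite Jc \<and> finite V \<and> (\<Union>v\<in>V. Jv v) = Jc \<and>
     (\<forall>v\<in>V. \<forall>w\<in>V. v \<noteq> w \<longrightarrow> Jv v \<inter> Jv w = {}) \<and>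
     A \<subseteq> Jc \<and> (\<forall>e\<in>E. card e = 2) \<and> \<Union>E = Jc - A \<and>
     (\<forall>e\<in>E. \<forall>f\<in>E. e \<noteq> f \<longrightarrow> e \<inter> f = {})"

definition circuit_value :: "nat set \<Rightarrow> nat set \<Rightarrow> (nat \<Rightarrow> nat set) \<Rightarrow> nat set \<Rightarrow> nat set set
    \<Rightarrow> (nat \<Rightarrow> nat set \<Rightarrow> rat) \<Rightarrow> nat set \<Rightarrow> rat" where
  "circuit_value Jc V Jv A E Fv x =
     (\<Sum>x' \<in> {x'. x' \<subseteq> Jc \<and> x' \<inter> A = x \<and> (\<forall>e\<in>E. e \<subseteq> x' \<or> e \<inter> x' = {})}.
        \<Prod>v\<in>V. Fv v (x' \<inter> Jv v))"

definition parity_constraint :: "nat set \<Rightarrow> (nat set \<Rightarrow> rat) \<Rightarrow> bool" where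
  "parity_constraint K' G \<longleftrightarrow>
     (\<exists>K :: nat set. finite K \<and> (is_copy K (even_rel K) K' G \<or> is_copy K (odd_rel K) K' G))"

definition parity_circuit :: "'a set \<Rightarrow> ('a set \<Rightarrow> rat) \<Rightarrow> nat set \<Rightarrow> nat set \<Rightarrow> (nat \<Rightarrow> nat set)
    \<Rightarrow> nat set \<Rightarrow> nat set set \<Rightarrow> (nat \<Rightarrow> nat set \<Rightarrow> rat) \<Rightarrow> bool" where
  "parity_circuit J F Jc V Jv A E Fv \<longleftrightarrow>
     is_circuit Jc V Jv A E \<and>
     (\<exists>v0\<in>V. is_copy J F (Jv v0) (Fv v0) \<and> (\<forall>v\<in>V - {v0}. parity_constraint (Jv v) (Fv v)))"

text \<open>Prat(F): supremum of F'(0)/F'(1) over unary parity-signatures F' of F with F'(1) > 0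
  (a positive constant multiple cancels in the ratio); 0 if F is identically zero.\<close>
definition Prat :: "'a set \<Rightarrow> ('a set \<Rightarrow> rat) \<Rightarrow> ereal" where
  "Prat J F = (if (\<forall>x. x \<subseteq> J \<longrightarrow> F x = 0) then 0 else
     Sup {ereal (real_of_rat (circuit_value Jc V Jv {a} E Fv {} / circuit_value Jc V Jv {a} E Fv {a}))
          | Jc V Jv a E Fv. parity_circuit J F Jc V Jv {a} E Fv \<and> circuit_value Jc V Jv {a} E Fv {a} > 0})"

end

theory Submission
  imports Defs
begin



lemma card_flip:
  assumes "finite J" "x \<subseteq> J" "i \<in> J"
  shows "card (flip x i) = (if i \<in> x then card x - 1 else Suc (card x))"
  using assms by (auto simp: flip_def finite_subset card_insert_if)

lemma flip_sub: "x \<subseteq> J \<Longrightarrow> i \<in> J \<Longrightarrow> flip x i \<subseteq> J"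
  by (auto simp: flip_def)

lemma card_pos_mem: assumes "finite x" "i \<in> x" shows "card x \<ge> 1"
proof -
  have "x \<noteq> {}" using \<open>i \<in> x\<close> by blast
  then have "card x > 0" using \<open>finite x\<close> by (simp add: card_gt_0_iff)
  then show ?thesis by simp
qed

lemma flip_parity:
  assumes "finite J" "x \<subseteq> J" "k \<in> J"
  shows "even (card (flip x k \<inter> J)) \<longleftrightarrow> odd (card x)"
proof -
  have fx: "finite x" using assms finite_subset by blast
  have e: "flip x k \<inter> J = flip x k" using flip_sub[OF assms(2,3)] by blast
  show ?thesis
  proof (cases "k \<in> x")
    case True
    have "card x \<ge> 1" using card_pos_mem[OF fx True] .
    then obtain m where m: "card x = Suc m" by (cases "card x") auto
    have "card (flip x k) = m" using card_flip[OF assms] True m by simp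
    then show ?thesis unfolding e m by simp
  next
    case False
    have "card (flip x k) = Suc (card x)" using card_flip[OF assms] False by simp
    then show ?thesis unfolding e by simp
  qed
qed

lemma st_even: "finite J \<Longrightarrow> strictly_terraced J (even_rel J)"
  unfolding strictly_terraced_def
proof (intro allI impI)
  fix x i j assume f: "finite J" and x: "x \<subseteq> J" and i: "i \<in> J" and j: "j \<in> J"
    and z: "even_rel J x = 0"
  have "x \<inter> J = x" using x by blast
  then have o: "odd (card x)" using z by (simp add: even_rel_def split: if_splits)
  show "even_rel J (flip x i) = even_rel J (flip x j)"
    unfolding even_rel_def using flip_parity[OF f x i] flip_parity[OF f x j] o by simp
qed

lemma st_odd: "finite J \<Longrightarrow> strictly_terraced J (odd_rel J)"
  unfolding strictly_terraced_def
proof (intro allI impI)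
  fix x i j assume f: "finite J" and x: "x \<subseteq> J" and i: "i \<in> J" and j: "j \<in> J"
    and z: "odd_rel J x = 0"
  have "x \<inter> J = x" using x by blast
  then have o: "even (card x)" using z by (simp add: odd_rel_def split: if_splits)
  show "odd_rel J (flip x i) = odd_rel J (flip x j)"
    unfolding odd_rel_def using flip_parity[OF f x i] flip_parity[OF f x j] o by simp
qed

lemma st_nae: "finite J \<Longrightarrow> strictly_terraced J (nae_rel J)"
  unfolding strictly_terraced_def
proof (intro allI impI)
  fix x i j assume f: "finite J" and x: "x \<subseteq> J" and i: "i \<in> J" and j: "j \<in> J"
    and z: "nae_rel J x = 0"
  have xx: "x \<inter> J = x" using x by blast
  have le: "card x \<le> card J" using card_mono[OF f x] .
  have fx: "finite x" using f x finite_subset by blast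
  have "card x = 0 \<or> card x = card J" using z le unfolding nae_rel_def xx
    by (simp split: if_splits) linarith
  then have xe: "x = {} \<or> x = J"
    using f x fx card_subset_eq card_0_eq by blast
  have "card (flip x i) = card (flip x j)"
  proof (cases "x = {}")
    case True then show ?thesis by (simp add: flip_def)
  next
    case False then have "x = J" using xe by auto
    then show ?thesis using i j f by (simp add: flip_def)
  qed
  moreover have "flip x i \<inter> J = flip x i" "flip x j \<inter> J = flip x j"
    using flip_sub[OF x i] flip_sub[OF x j] by blast+
  ultimately show "nae_rel J (flip x i) = nae_rel J (flip x j)"
    unfolding nae_rel_def by simp
qed



definition sd :: "'a set \<Rightarrow> 'a set \<Rightarrow> 'a set" where
  "sd A B = (A - B) \<union> (B - A)"

lemma sd_iff [simp]: "x \<in> sd A B \<longleftrightarrow> (x \<in> A \<longleftrightarrow> x \<notin> B)"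
  unfolding sd_def by blast

lemma sd_Int: "sd A B \<inter> K = sd (A \<inter> K) (B \<inter> K)"
  unfolding sd_def by blast

lemma card_sd_parity:
  assumes "finite A" "finite B"
  shows "even (card (sd A B)) \<longleftrightarrow> (even (card A) \<longleftrightarrow> even (card B))"
proof -
  have fi: "finite (A \<inter> B)" "finite (B \<inter> A)" using assms by auto
  have d1: "card (A - B) = card A - card (A \<inter> B)" using card_Diff_subset_Int[OF fi(1)] .
  have d2: "card (B - A) = card B - card (B \<inter> A)" using card_Diff_subset_Int[OF fi(2)] .
  have l1: "card (A \<inter> B) \<le> card A" using assms by (simp add: card_mono)
  have l2: "card (A \<inter> B) \<le> card B" using assms by (simp add: card_mono)
  have "card (sd A B) = card (A - B) + card (B - A)"
    unfolding sd_def using assms by (intro card_Un_disjoint) auto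
  also have "\<dots> = (card A - card (A \<inter> B)) + (card B - card (A \<inter> B))"
    using d1 d2 by (simp add: Int_commute)
  finally have "card (sd A B) + 2 * card (A \<inter> B) = card A + card B" using l1 l2 by simp
  then show ?thesis by presburger
qed

definition parity_like :: "nat set \<Rightarrow> (nat set \<Rightarrow> rat) \<Rightarrow> bool" where
  "parity_like K G \<longleftrightarrow> (\<exists>b. \<forall>y. y \<subseteq> K \<longrightarrow> G y = (if even (card y) = b then 1 else 0))"

lemma copy_card:
  assumes "bij_betw \<pi> K K'" "y \<subseteq> K'"
  shows "card (K \<inter> \<pi> -` y) = card y"
proof -
  have "\<pi> ` (K \<inter> \<pi> -` y) = y"
  proof
    show "\<pi> ` (K \<inter> \<pi> -` y) \<subseteq> y" by blast
    show "y \<subseteq> \<pi> ` (K \<inter> \<pi> -` y)"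
    proof
      fix z assume z: "z \<in> y"
      then have "z \<in> \<pi> ` K" using assms unfolding bij_betw_def by blast
      then obtain k where "k \<in> K" "z = \<pi> k" by blast
      then show "z \<in> \<pi> ` (K \<inter> \<pi> -` y)" using z by blast
    qed
  qed
  then have "bij_betw \<pi> (K \<inter> \<pi> -` y) y"
    using bij_betw_subset[OF assms(1), of "K \<inter> \<pi> -` y" y] by blast
  then show ?thesis by (rule bij_betw_same_card)
qed

lemma copy_even: "is_copy K (even_rel K) K' G \<Longrightarrow> parity_like K' G"
proof -
  assume "is_copy K (even_rel K) K' G"
  then obtain \<pi> where b: "bij_betw \<pi> K K'" and g: "\<forall>y. y \<subseteq> K' \<longrightarrow> G y = even_rel K (K \<inter> \<pi> -` y)"
    unfolding is_copy_def by blast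
  have "\<forall>y. y \<subseteq> K' \<longrightarrow> G y = (if even (card y) = True then 1 else 0)"
  proof (intro allI impI)
    fix y assume y: "y \<subseteq> K'"
    have "(K \<inter> \<pi> -` y) \<inter> K = K \<inter> \<pi> -` y" by blast
    then show "G y = (if even (card y) = True then 1 else 0)"
      using g y copy_card[OF b y] by (simp add: even_rel_def)
  qed
  then show ?thesis unfolding parity_like_def by blast
qed

lemma copy_odd: "is_copy K (odd_rel K) K' G \<Longrightarrow> parity_like K' G"
proof -
  assume "is_copy K (odd_rel K) K' G"
  then obtain \<pi> where b: "bij_betw \<pi> K K'" and g: "\<forall>y. y \<subseteq> K' \<longrightarrow> G y = odd_rel K (K \<inter> \<pi> -` y)"
    unfolding is_copy_def by blast
  have "\<forall>y. y \<subseteq> K' \<longrightarrow> G y = (if even (card y) = False then 1 else 0)"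
  proof (intro allI impI)
    fix y assume y: "y \<subseteq> K'"
    have "(K \<inter> \<pi> -` y) \<inter> K = K \<inter> \<pi> -` y" by blast
    then show "G y = (if even (card y) = False then 1 else 0)"
      using g y copy_card[OF b y] by (simp add: odd_rel_def)
  qed
  then show ?thesis unfolding parity_like_def by blast
qed

lemma pc_like: "parity_constraint K' G \<Longrightarrow> parity_like K' G"
  unfolding parity_constraint_def using copy_even copy_odd by blast

lemma copy_nae:
  assumes "is_copy J (nae_rel J) K' G" "finite K'" "y \<subseteq> K'"
  shows "G y = (if y \<noteq> {} \<and> y \<noteq> K' then 1 else 0)"
proof -
  obtain \<pi> where b: "bij_betw \<pi> J K'" and g: "\<forall>y. y \<subseteq> K' \<longrightarrow> G y = nae_rel J (J \<inter> \<pi> -` y)"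
    using assms(1) unfolding is_copy_def by blast
  have cJ: "card J = card K'" using bij_betw_same_card[OF b] .
  have e: "(J \<inter> \<pi> -` y) \<inter> J = J \<inter> \<pi> -` y" by blast
  have fy: "finite y" using assms(2,3) finite_subset by blast
  have c1: "1 \<le> card y \<longleftrightarrow> y \<noteq> {}" using fy by (simp add: Suc_le_eq card_gt_0_iff)
  have c2: "card y + 1 \<le> card K' \<longleftrightarrow> y \<noteq> K'"
  proof
    assume "card y + 1 \<le> card K'" then show "y \<noteq> K'" by auto
  next
    assume "y \<noteq> K'" then have "y \<subset> K'" using assms(3) by blast
    then have "card y < card K'" using psubset_card_mono assms(2) by blast
    then show "card y + 1 \<le> card K'" by simp
  qed
  show ?thesis using g assms(3) copy_card[OF b assms(3)] e cJ c1 c2 by (simp add: nae_rel_def)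
qed

definition econs :: "nat set set \<Rightarrow> nat set \<Rightarrow> bool" where
  "econs E x \<longleftrightarrow> (\<forall>e\<in>E. e \<subseteq> x \<or> e \<inter> x = {})"

lemma econs_sd: "econs E x \<Longrightarrow> econs E y \<Longrightarrow> econs E (sd x y)"
  unfolding econs_def sd_def by blast

lemma circD:
  assumes "is_circuit Jc V Jv A E"
  shows "finite Jc" "finite V" "(\<Union>v\<in>V. Jv v) = Jc"
    "\<forall>v\<in>V. \<forall>w\<in>V. v \<noteq> w \<longrightarrow> Jv v \<inter> Jv w = {}"
    "A \<subseteq> Jc" "\<forall>e\<in>E. card e = 2" "\<Union>E = Jc - A"
    "\<forall>e\<in>E. \<forall>f\<in>E. e \<noteq> f \<longrightarrow> e \<inter> f = {}"
proof -
  have c: "finite Jc \<and> finite V \<and> (\<Union>v\<in>V. Jv v) = Jc \<and>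
     (\<forall>v\<in>V. \<forall>w\<in>V. v \<noteq> w \<longrightarrow> Jv v \<inter> Jv w = {}) \<and>
     A \<subseteq> Jc \<and> (\<forall>e\<in>E. card e = 2) \<and> \<Union>E = Jc - A \<and>
     (\<forall>e\<in>E. \<forall>f\<in>E. e \<noteq> f \<longrightarrow> e \<inter> f = {})" using assms unfolding is_circuit_def .
  show "finite Jc" using c by (rule conjunct1)
  show "finite V" using c by (elim conjE)
  show "(\<Union>v\<in>V. Jv v) = Jc" using c by (elim conjE)
  show "\<forall>v\<in>V. \<forall>w\<in>V. v \<noteq> w \<longrightarrow> Jv v \<inter> Jv w = {}" using c by (elim conjE)
  show "A \<subseteq> Jc" using c by (elim conjE)
  show "\<forall>e\<in>E. card e = 2" using c by (elim conjE)
  show "\<Union>E = Jc - A" using c by (elim conjE)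
  show "\<forall>e\<in>E. \<forall>f\<in>E. e \<noteq> f \<longrightarrow> e \<inter> f = {}" using c by (elim conjE)
qed

lemma circ_finE:
  assumes "is_circuit Jc V Jv A E"
  shows "finite E" "\<And>e. e \<in> E \<Longrightarrow> finite e" "\<And>v. v \<in> V \<Longrightarrow> Jv v \<subseteq> Jc"
    "finite Jc" "finite V"
proof -
  note c = circD[OF assms]
  have "E \<subseteq> Pow Jc" using c(7) by blast
  then show "finite E" using c(1) finite_subset by blast
  show "\<And>e. e \<in> E \<Longrightarrow> finite e"
  proof -
    fix e assume "e \<in> E" then have "card e = 2" using c(6) by blast
    then show "finite e" by (intro card_ge_0_finite) simp
  qed
  show "\<And>v. v \<in> V \<Longrightarrow> Jv v \<subseteq> Jc" using c(3) by blast
  show "finite Jc" by (rule c(1))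
  show "finite V" by (rule c(2))
qed

lemma parity_contra:
  assumes circ: "is_circuit Jc V Jv {a} E"
    and pl: "\<forall>v\<in>V. parity_like (Jv v) (Fv v)"
    and x0: "x0 \<subseteq> Jc" "a \<notin> x0" "econs E x0" "\<forall>v\<in>V. Fv v (x0 \<inter> Jv v) = 1"
    and x1: "x1 \<subseteq> Jc" "a \<in> x1" "econs E x1" "\<forall>v\<in>V. Fv v (x1 \<inter> Jv v) = 1"
  shows False
proof -
  note fin = circ_finE[OF circ]
  define d where "d = sd x0 x1"
  have dJ: "d \<subseteq> Jc" using x0(1) x1(1) unfolding d_def sd_def by blast
  have fd: "finite d" using dJ fin(4) finite_subset by blast
  have ev: "even (card (d \<inter> Jv v))" if v: "v \<in> V" for v
  proof -
    obtain b where b: "\<forall>y. y \<subseteq> Jv v \<longrightarrow> Fv v y = (if even (card y) = b then 1 else 0)"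
      using pl v unfolding parity_like_def by blast
    have "Fv v (x0 \<inter> Jv v) = 1" "Fv v (x1 \<inter> Jv v) = 1" using x0(4) x1(4) v by auto
    then have "even (card (x0 \<inter> Jv v)) = b" "even (card (x1 \<inter> Jv v)) = b"
      using b[rule_format, of "x0 \<inter> Jv v"] b[rule_format, of "x1 \<inter> Jv v"]
      by (auto split: if_splits)
    moreover have "finite (x0 \<inter> Jv v)" "finite (x1 \<inter> Jv v)"
      using x0(1) x1(1) fin(4) finite_subset by blast+
    ultimately show ?thesis unfolding d_def sd_Int using card_sd_parity by blast
  qed
  note c = circD[OF circ]
  have dU: "d = (\<Union>v\<in>V. d \<inter> Jv v)" using dJ c(3) by blast
  have "card (\<Union>v\<in>V. d \<inter> Jv v) = (\<Sum>v\<in>V. card (d \<inter> Jv v))"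
  proof (rule card_UN_disjoint[OF fin(5)])
    show "\<forall>v\<in>V. finite (d \<inter> Jv v)" using fd by blast
    show "\<forall>v\<in>V. \<forall>w\<in>V. v \<noteq> w \<longrightarrow> d \<inter> Jv v \<inter> (d \<inter> Jv w) = {}"
      using c(4) by blast
  qed
  then have "card d = (\<Sum>v\<in>V. card (d \<inter> Jv v))" using dU by simp
  then have e1: "even (card d)" using ev by (simp add: dvd_sum)
  have ad: "a \<in> d" using x0(2) x1(2) unfolding d_def by simp
  define E' where "E' = {e \<in> E. e \<subseteq> d}"
  have "d - {a} = \<Union>E'"
  proof
    show "d - {a} \<subseteq> \<Union>E'"
    proof
      fix p assume p: "p \<in> d - {a}"
      then have "p \<in> Jc - {a}" using dJ by blast
      then obtain e where e: "e \<in> E" "p \<in> e" using c(7) by blast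
      have "econs E d" unfolding d_def using econs_sd x0(3) x1(3) by blast
      then have "e \<subseteq> d" using e p unfolding econs_def by blast
      then show "p \<in> \<Union>E'" using e unfolding E'_def by blast
    qed
    show "\<Union>E' \<subseteq> d - {a}"
    proof -
      have "\<Union>E \<subseteq> Jc - {a}" using c(7) by blast
      then show ?thesis unfolding E'_def by blast
    qed
  qed
  moreover have "card (\<Union>E') = sum card E'"
  proof (rule card_Union_disjoint)
    show "pairwise disjnt E'" using c(8) unfolding pairwise_def disjnt_def E'_def by blast
    show "\<And>A. A \<in> E' \<Longrightarrow> finite A" using fin(2) unfolding E'_def by blast
  qed
  moreover have "even (sum card E')"
  proof (rule dvd_sum)
    fix e assume "e \<in> E'" then have "card e = 2" using c(6) unfolding E'_def by blast
    then show "2 dvd card e" by simp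
  qed
  ultimately have e2: "even (card (d - {a}))" by simp
  have "card d = Suc (card (d - {a}))" using card.remove[OF fd ad] .
  then show False using e1 e2 by simp
qed



lemma pl_val:
  assumes "parity_like K G" "y \<subseteq> K"
  shows "G y = 0 \<or> G y = 1"
proof -
  obtain b where "\<forall>w. w \<subseteq> K \<longrightarrow> G w = (if even (card w) = b then 1 else 0)"
    using assms(1) unfolding parity_like_def by blast
  then have "G y = (if even (card y) = b then 1 else 0)" using assms(2) by blast
  then show ?thesis by simp
qed

lemma pl_one:
  assumes "parity_like K G" "y \<subseteq> K" "G y \<noteq> 0"
  shows "G y = 1"
  using pl_val[OF assms(1,2)] assms(3) by blast

lemma prod_ones:
  assumes "finite W" "\<forall>v\<in>W. parity_like (Jv v) (Fv v)"
    and "(\<Prod>v\<in>W. Fv v (x \<inter> Jv v)) \<noteq> (0::rat)"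
  shows "\<forall>v\<in>W. Fv v (x \<inter> Jv v) = 1"
proof
  fix v assume v: "v \<in> W"
  have "Fv v (x \<inter> Jv v) \<noteq> 0" using assms(3) v prod_zero_iff[OF assms(1)] by blast
  then show "Fv v (x \<inter> Jv v) = 1" using pl_one assms(2) v by blast
qed

lemma val_zero:
  assumes circ: "is_circuit Jc V Jv {a} E"
    and pl: "\<forall>v\<in>V. parity_like (Jv v) (Fv v)"
    and pos: "circuit_value Jc V Jv {a} E Fv {a} \<noteq> 0"
  shows "circuit_value Jc V Jv {a} E Fv {} = 0"
proof (rule ccontr)
  note fin = circ_finE[OF circ]
  assume "circuit_value Jc V Jv {a} E Fv {} \<noteq> 0"
  then obtain x0 where x0: "x0 \<in> {x'. x' \<subseteq> Jc \<and> x' \<inter> {a} = {} \<and> (\<forall>e\<in>E. e \<subseteq> x' \<or> e \<inter> x' = {})}"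
    and p0: "(\<Prod>v\<in>V. Fv v (x0 \<inter> Jv v)) \<noteq> 0"
    unfolding circuit_value_def by (rule sum.not_neutral_contains_not_neutral)
  obtain x1 where x1: "x1 \<in> {x'. x' \<subseteq> Jc \<and> x' \<inter> {a} = {a} \<and> (\<forall>e\<in>E. e \<subseteq> x' \<or> e \<inter> x' = {})}"
    and p1: "(\<Prod>v\<in>V. Fv v (x1 \<inter> Jv v)) \<noteq> 0"
    using pos unfolding circuit_value_def by (rule sum.not_neutral_contains_not_neutral)
  show False
  proof (rule parity_contra[OF circ pl])
    show "x0 \<subseteq> Jc" "a \<notin> x0" "econs E x0" using x0 unfolding econs_def by auto
    show "x1 \<subseteq> Jc" "a \<in> x1" "econs E x1" using x1 unfolding econs_def by auto
    show "\<forall>v\<in>V. Fv v (x0 \<inter> Jv v) = 1" using prod_ones[OF fin(5) pl p0] .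
    show "\<forall>v\<in>V. Fv v (x1 \<inter> Jv v) = 1" using prod_ones[OF fin(5) pl p1] .
  qed
qed

lemma aff_one:
  assumes pl: "parity_like K G" and fin: "finite K"
    and "G (x \<inter> K) = 1" "G (y \<inter> K) = 1" "G (z \<inter> K) = 1"
  shows "G (sd (sd x y) z \<inter> K) = 1"
proof -
  obtain b where b: "\<forall>w. w \<subseteq> K \<longrightarrow> G w = (if even (card w) = b then 1 else 0)"
    using pl unfolding parity_like_def by blast
  have px: "even (card (x \<inter> K)) = b" using b[rule_format, of "x \<inter> K"] assms(3)
    by (auto split: if_splits)
  have py: "even (card (y \<inter> K)) = b" using b[rule_format, of "y \<inter> K"] assms(4)
    by (auto split: if_splits)
  have pz: "even (card (z \<inter> K)) = b" using b[rule_format, of "z \<inter> K"] assms(5)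
    by (auto split: if_splits)
  have f: "finite (x \<inter> K)" "finite (y \<inter> K)" "finite (z \<inter> K)" using fin by auto
  have f2: "finite (sd (x \<inter> K) (y \<inter> K))" using f unfolding sd_def by blast
  have e: "sd (sd x y) z \<inter> K = sd (sd (x \<inter> K) (y \<inter> K)) (z \<inter> K)" by (simp add: sd_Int)
  have "even (card (sd (sd (x \<inter> K) (y \<inter> K)) (z \<inter> K))) = b"
    using card_sd_parity[OF f2 f(3)] card_sd_parity[OF f(1) f(2)] px py pz by blast
  moreover have "sd (sd x y) z \<inter> K \<subseteq> K" by blast
  ultimately show ?thesis using b e by simp
qed



lemma sd_inj: "inj_on (\<lambda>u. sd (sd u y) z) A"
  by (rule inj_onI) (auto simp: set_eq_iff)

lemma nae_bound:
  assumes circ: "is_circuit Jc V Jv {a} E" and v0: "v0 \<in> V"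
    and G0: "\<forall>y. y \<subseteq> Jv v0 \<longrightarrow> Fv v0 y = (if y \<noteq> {} \<and> y \<noteq> Jv v0 then 1 else 0)"
    and pl: "\<forall>v\<in>V-{v0}. parity_like (Jv v) (Fv v)"
    and pos: "circuit_value Jc V Jv {a} E Fv {a} > 0"
  shows "circuit_value Jc V Jv {a} E Fv {} \<le> 3 * circuit_value Jc V Jv {a} E Fv {a}"
proof -
  note fin = circ_finE[OF circ]
  note c = circD[OF circ]
  define M where "M = {x. x \<subseteq> Jc \<and> econs E x \<and> (\<forall>v\<in>V-{v0}. Fv v (x \<inter> Jv v) = 1)}"
  define g where "g x = Fv v0 (x \<inter> Jv v0)" for x
  have MPow: "M \<subseteq> Pow Jc" unfolding M_def by blast
  have finM: "finite M" using MPow fin(4) finite_subset by blast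
  have finW: "finite (V - {v0})" using fin(5) by blast
  have val: "circuit_value Jc V Jv {a} E Fv X = (\<Sum>x\<in>{x\<in>M. x \<inter> {a} = X}. g x)" for X
    unfolding circuit_value_def
  proof (rule sum.mono_neutral_cong_right)
    let ?T = "{x'. x' \<subseteq> Jc \<and> x' \<inter> {a} = X \<and> (\<forall>e\<in>E. e \<subseteq> x' \<or> e \<inter> x' = {})}"
    have "?T \<subseteq> Pow Jc" by blast
    then show "finite ?T" using fin(4) finite_subset by blast
    show "{x \<in> M. x \<inter> {a} = X} \<subseteq> ?T" unfolding M_def econs_def by blast
    show "\<forall>i\<in>?T - {x \<in> M. x \<inter> {a} = X}. (\<Prod>v\<in>V. Fv v (i \<inter> Jv v)) = 0"
    proof
      fix i assume i: "i \<in> ?T - {x \<in> M. x \<inter> {a} = X}"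
      then have "\<not> (\<forall>v\<in>V-{v0}. Fv v (i \<inter> Jv v) = 1)" unfolding M_def econs_def by blast
      then obtain v where v: "v \<in> V - {v0}" "Fv v (i \<inter> Jv v) \<noteq> 1" by blast
      then have "Fv v (i \<inter> Jv v) = 0" using pl_val[of "Jv v" "Fv v" "i \<inter> Jv v"] pl by blast
      then show "(\<Prod>v\<in>V. Fv v (i \<inter> Jv v)) = 0" using v(1) fin(5) by (metis DiffD1 prod_zero_iff)
    qed
    show "(\<Prod>v\<in>V. Fv v (x \<inter> Jv v)) = g x" if x: "x \<in> {x \<in> M. x \<inter> {a} = X}" for x
    proof -
      have "(\<Prod>v\<in>V. Fv v (x \<inter> Jv v)) = Fv v0 (x \<inter> Jv v0) * (\<Prod>v\<in>V-{v0}. Fv v (x \<inter> Jv v))"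
        using prod.remove[OF fin(5) v0] .
      moreover have "(\<Prod>v\<in>V-{v0}. Fv v (x \<inter> Jv v)) = 1"
        using x unfolding M_def by (intro prod.neutral) blast
      ultimately show ?thesis unfolding g_def by simp
    qed
  qed
  define good where "good x \<longleftrightarrow> x \<inter> Jv v0 \<noteq> {} \<and> x \<inter> Jv v0 \<noteq> Jv v0" for x
  have gval: "g x = (if good x then 1 else 0)" for x
    unfolding g_def good_def using G0 by blast
  define M0 where "M0 = {x\<in>M. x \<inter> {a} = {}}"
  define M1 where "M1 = {x\<in>M. x \<inter> {a} = {a}}"
  define M1g where "M1g = {x\<in>M1. good x}"
  have finM0: "finite M0" "finite M1" "finite M1g" using finM unfolding M0_def M1_def M1g_def by auto
  have v1: "circuit_value Jc V Jv {a} E Fv {a} = of_nat (card M1g)"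
  proof -
    have "circuit_value Jc V Jv {a} E Fv {a} = (\<Sum>x\<in>M1. (if good x then 1 else 0))"
      unfolding val M1_def using gval by simp
    also have "\<dots> = (\<Sum>x\<in>M1g. 1)" unfolding M1g_def by (simp only: sum.inter_filter[OF finM0(2)])
    finally show ?thesis by simp
  qed
  have v0v: "circuit_value Jc V Jv {a} E Fv {} \<le> of_nat (card M0)"
  proof -
    have "circuit_value Jc V Jv {a} E Fv {} = (\<Sum>x\<in>M0. g x)" unfolding val M0_def ..
    also have "\<dots> \<le> of_nat (card M0) * 1" by (rule sum_bounded_above) (simp add: gval)
    finally show ?thesis by simp
  qed
  have M1gne: "M1g \<noteq> {}" using pos v1 by auto
  then obtain x1 where x1: "x1 \<in> M1g" by blast
  have aff: "sd (sd x y) z \<in> M" if "x \<in> M" "y \<in> M" "z \<in> M" for x y z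
  proof -
    have "sd (sd x y) z \<subseteq> Jc" using that unfolding M_def sd_def by blast
    moreover have "econs E (sd (sd x y) z)"
    proof -
      have "econs E x" "econs E y" "econs E z" using that unfolding M_def by blast+
      then show ?thesis using econs_sd by metis
    qed
    moreover have "\<forall>v\<in>V-{v0}. Fv v (sd (sd x y) z \<inter> Jv v) = 1"
    proof
      fix v assume v: "v \<in> V - {v0}"
      have fv: "finite (Jv v)" using fin(3) fin(4) v finite_subset by blast
      have "Fv v (x \<inter> Jv v) = 1" "Fv v (y \<inter> Jv v) = 1" "Fv v (z \<inter> Jv v) = 1"
        using that v unfolding M_def by blast+
      moreover have "parity_like (Jv v) (Fv v)" using pl v by blast
      ultimately show "Fv v (sd (sd x y) z \<inter> Jv v) = 1"
        using aff_one[of "Jv v" "Fv v" x y z] fv by blast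
    qed
    ultimately show ?thesis unfolding M_def by blast
  qed
  have x1M: "x1 \<in> M" "a \<in> x1" "good x1" using x1 unfolding M1g_def M1_def by auto
  have c01: "card M0 \<le> card M1"
  proof (cases "M0 = {}")
    case True then show ?thesis by simp
  next
    case False
    then obtain x0 where x0: "x0 \<in> M0" by blast
    have x0M: "x0 \<in> M" "a \<notin> x0" using x0 unfolding M0_def by auto
    show ?thesis
    proof (rule card_inj_on_le[OF sd_inj _ finM0(2)])
      show "(\<lambda>u. sd (sd u x0) x1) ` M0 \<subseteq> M1"
      proof
        fix w assume "w \<in> (\<lambda>u. sd (sd u x0) x1) ` M0"
        then obtain u where u: "u \<in> M0" "w = sd (sd u x0) x1" by blast
        have "u \<in> M" "a \<notin> u" using u(1) unfolding M0_def by auto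
        then have "w \<in> M" "a \<in> w" using aff x0M x1M u(2) by auto
        then show "w \<in> M1" unfolding M1_def by blast
      qed
    qed
  qed
  define Fib where "Fib z = {x\<in>M1. x \<inter> Jv v0 = z}" for z
  have fibb: "card (Fib z) \<le> card M1g" for z
  proof (cases "Fib z = {}")
    case True then show ?thesis by simp
  next
    case False
    then obtain y where y: "y \<in> Fib z" by blast
    have yM: "y \<in> M" "a \<in> y" "y \<inter> Jv v0 = z" using y unfolding Fib_def M1_def by auto
    show ?thesis
    proof (rule card_inj_on_le[OF sd_inj _ finM0(3)])
      show "(\<lambda>u. sd (sd u y) x1) ` Fib z \<subseteq> M1g"
      proof
        fix w assume "w \<in> (\<lambda>u. sd (sd u y) x1) ` Fib z"
        then obtain u where u: "u \<in> Fib z" "w = sd (sd u y) x1" by blast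
        have uM: "u \<in> M" "a \<in> u" "u \<inter> Jv v0 = z" using u(1) unfolding Fib_def M1_def by auto
        then have "w \<in> M" "a \<in> w" using aff yM x1M u(2) by auto
        moreover have "w \<inter> Jv v0 = x1 \<inter> Jv v0"
          using uM(3) yM(3) u(2) by (auto simp: set_eq_iff)
        ultimately show "w \<in> M1g" using x1M(3) unfolding M1g_def M1_def good_def by auto
      qed
    qed
  qed
  have "M1 \<subseteq> M1g \<union> (Fib {} \<union> Fib (Jv v0))"
    unfolding M1g_def Fib_def good_def by blast
  then have "card M1 \<le> card (M1g \<union> (Fib {} \<union> Fib (Jv v0)))"
    using finM0 unfolding Fib_def M1g_def by (intro card_mono) auto
  also have "\<dots> \<le> card M1g + (card (Fib {}) + card (Fib (Jv v0)))"
    by (meson add_le_mono card_Un_le le_refl order_trans)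
  also have "\<dots> \<le> 3 * card M1g" using fibb[of "{}"] fibb[of "Jv v0"] by simp
  finally have "card M0 \<le> 3 * card M1g" using c01 by simp
  then have "(of_nat (card M0) :: rat) \<le> 3 * of_nat (card M1g)"
    by (metis of_nat_le_iff of_nat_mult of_nat_numeral)
  then show ?thesis using v0v v1 by simp
qed



lemma prat_nae:
  assumes "finite J"
  shows "Prat J (nae_rel J) \<le> 3"
proof (cases "\<forall>x. x \<subseteq> J \<longrightarrow> nae_rel J x = 0")
  case True then show ?thesis unfolding Prat_def by simp
next
  case False
  have "Sup {ereal (real_of_rat (circuit_value Jc V Jv {a} E Fv {} / circuit_value Jc V Jv {a} E Fv {a}))
          | Jc V Jv a E Fv. parity_circuit J (nae_rel J) Jc V Jv {a} E Fv \<and> circuit_value Jc V Jv {a} E Fv {a} > 0} \<le> 3"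
  proof (rule Sup_least)
    fix r assume "r \<in> {ereal (real_of_rat (circuit_value Jc V Jv {a} E Fv {} / circuit_value Jc V Jv {a} E Fv {a}))
          | Jc V Jv a E Fv. parity_circuit J (nae_rel J) Jc V Jv {a} E Fv \<and> circuit_value Jc V Jv {a} E Fv {a} > 0}"
    then obtain Jc V Jv a E Fv where r: "r = ereal (real_of_rat (circuit_value Jc V Jv {a} E Fv {} / circuit_value Jc V Jv {a} E Fv {a}))"
      and pc: "parity_circuit J (nae_rel J) Jc V Jv {a} E Fv" and pos: "circuit_value Jc V Jv {a} E Fv {a} > 0"
      by blast
    have circ: "is_circuit Jc V Jv {a} E" using pc unfolding parity_circuit_def by blast
    obtain v0 where v0: "v0 \<in> V" and cp: "is_copy J (nae_rel J) (Jv v0) (Fv v0)"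
      and oth: "\<forall>v\<in>V - {v0}. parity_constraint (Jv v) (Fv v)"
      using pc unfolding parity_circuit_def by blast
    note fin = circ_finE[OF circ]
    have fv0: "finite (Jv v0)" using fin(3)[OF v0] fin(4) finite_subset by blast
    have G0: "\<forall>y. y \<subseteq> Jv v0 \<longrightarrow> Fv v0 y = (if y \<noteq> {} \<and> y \<noteq> Jv v0 then 1 else 0)"
      using copy_nae[OF cp fv0] by blast
    have pl: "\<forall>v\<in>V-{v0}. parity_like (Jv v) (Fv v)" using oth pc_like by blast
    have le: "circuit_value Jc V Jv {a} E Fv {} \<le> 3 * circuit_value Jc V Jv {a} E Fv {a}"
      using nae_bound[OF circ v0 G0 pl pos] .
    have "circuit_value Jc V Jv {a} E Fv {} / circuit_value Jc V Jv {a} E Fv {a} \<le> 3"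
      using le pos by (simp add: divide_le_eq)
    then have "real_of_rat (circuit_value Jc V Jv {a} E Fv {} / circuit_value Jc V Jv {a} E Fv {a}) \<le> real_of_rat 3"
      using of_rat_less_eq by blast
    then show "r \<le> 3" unfolding r by simp
  qed
  then show ?thesis unfolding Prat_def using False by simp
qed

lemma prat_par:
  assumes cp: "\<forall>(K'::nat set) G. is_copy J F K' G \<longrightarrow> parity_like K' G"
    and wit: "\<exists>Jc V Jv a E Fv. parity_circuit J F Jc V Jv {a} E Fv \<and> circuit_value Jc V Jv {a} E Fv {a} > 0"
    and nz: "\<not> (\<forall>x. x \<subseteq> J \<longrightarrow> F x = 0)"
  shows "Prat J F = 0"
proof -
  let ?S = "{ereal (real_of_rat (circuit_value Jc V Jv {a} E Fv {} / circuit_value Jc V Jv {a} E Fv {a}))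
          | Jc V Jv a E Fv. parity_circuit J F Jc V Jv {a} E Fv \<and> circuit_value Jc V Jv {a} E Fv {a} > 0}"
  have z: "circuit_value Jc V Jv {a} E Fv {} = 0"
    if pc: "parity_circuit J F Jc V Jv {a} E Fv" and pos: "circuit_value Jc V Jv {a} E Fv {a} > 0"
    for Jc V Jv a E Fv
  proof -
    have circ: "is_circuit Jc V Jv {a} E" using pc unfolding parity_circuit_def by blast
    obtain v0 where v0: "v0 \<in> V" and c0: "is_copy J F (Jv v0) (Fv v0)"
      and oth: "\<forall>v\<in>V - {v0}. parity_constraint (Jv v) (Fv v)"
      using pc unfolding parity_circuit_def by blast
    have "\<forall>v\<in>V. parity_like (Jv v) (Fv v)"
    proof
      fix v assume v: "v \<in> V"
      show "parity_like (Jv v) (Fv v)"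
      proof (cases "v = v0")
        case True then show ?thesis using cp c0 by blast
      next
        case False then show ?thesis using oth v pc_like by blast
      qed
    qed
    then show ?thesis using val_zero[OF circ] pos by simp
  qed
  have "?S = {0}"
  proof
    show "?S \<subseteq> {0}"
    proof
      fix r assume "r \<in> ?S"
      then obtain Jc V Jv a E Fv where r: "r = ereal (real_of_rat (circuit_value Jc V Jv {a} E Fv {} / circuit_value Jc V Jv {a} E Fv {a}))"
        and pc: "parity_circuit J F Jc V Jv {a} E Fv" and pos: "circuit_value Jc V Jv {a} E Fv {a} > 0"
        by blast
      show "r \<in> {0}" using z[OF pc pos] r by (simp add: zero_ereal_def)
    qed
    show "{0} \<subseteq> ?S"
    proof -
      obtain Jc V Jv a E Fv where pc: "parity_circuit J F Jc V Jv {a} E Fv"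
        and pos: "circuit_value Jc V Jv {a} E Fv {a} > 0" using wit by blast
      have "ereal (real_of_rat (circuit_value Jc V Jv {a} E Fv {} / circuit_value Jc V Jv {a} E Fv {a})) = 0"
        using z[OF pc pos] by (simp add: zero_ereal_def)
      then have "0 \<in> ?S" using pc pos by (metis (mono_tags, lifting) mem_Collect_eq)
      then show ?thesis by blast
    qed
  qed
  then show ?thesis unfolding Prat_def using nz by simp
qed



lemma construct:
  assumes fJ: "finite J" and y0: "y0 \<subseteq> J" and Fy: "F y0 > 0" and Fnn: "\<forall>z. F z \<ge> 0"
  shows "\<exists>Jc V Jv a E Fv. parity_circuit J F Jc V Jv {a} E Fv \<and> circuit_value Jc V Jv {a} E Fv {a} > 0"
proof -
  define n where "n = card J"
  obtain h where h: "bij_betw h J {0..<n}" using ex_bij_betw_finite_nat[OF fJ] unfolding n_def by blast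
  define K where "K = {n..2*n}"
  define Jc where "Jc = {0..2*n}"
  define V where "V = {0::nat, 1}"
  define Jv where "Jv v = (if v = 0 then {0..<n} else K)" for v :: nat
  define E where "E = (\<lambda>i. {i, n+i}) ` {0..<n}"
  define G1 where "G1 = (if even (card y0 + 1) then even_rel K else odd_rel K)"
  define Fv where "Fv v = (if v = 0 then (\<lambda>z. F (J \<inter> h -` z)) else G1)" for v :: nat
  define a where "a = 2 * n"
  have circ: "is_circuit Jc V Jv {a} E"
    unfolding is_circuit_def
  proof (intro conjI)
    show "finite Jc" unfolding Jc_def by simp
    show "finite V" unfolding V_def by simp
    show "(\<Union>v\<in>V. Jv v) = Jc" unfolding V_def Jv_def Jc_def K_def by auto
    show "\<forall>v\<in>V. \<forall>w\<in>V. v \<noteq> w \<longrightarrow> Jv v \<inter> Jv w = {}" unfolding V_def Jv_def K_def by auto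
    show "{a} \<subseteq> Jc" unfolding a_def Jc_def by simp
    show "\<forall>e\<in>E. card e = 2" unfolding E_def by auto
    show "\<Union>E = Jc - {a}"
    proof
      show "\<Union>E \<subseteq> Jc - {a}" unfolding E_def Jc_def a_def by auto
      show "Jc - {a} \<subseteq> \<Union>E"
      proof
        fix p assume p: "p \<in> Jc - {a}"
        then have p2: "p < 2 * n" unfolding Jc_def a_def by auto
        show "p \<in> \<Union>E"
        proof (cases "p < n")
          case True then have "p \<in> {p, n + p}" "p \<in> {0..<n}" by auto
          then show ?thesis unfolding E_def by blast
        next
          case False then have "p = n + (p - n)" "p - n \<in> {0..<n}" using p2 by auto
          then have "p \<in> {p - n, n + (p - n)}" "p - n \<in> {0..<n}" by auto
          then show ?thesis unfolding E_def by blast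
        qed
      qed
    qed
    show "\<forall>e\<in>E. \<forall>f\<in>E. e \<noteq> f \<longrightarrow> e \<inter> f = {}" unfolding E_def by auto
  qed
  have pc: "parity_circuit J F Jc V Jv {a} E Fv"
    unfolding parity_circuit_def
  proof (intro conjI bexI[of _ 0])
    show "is_circuit Jc V Jv {a} E" by (rule circ)
    show "0 \<in> V" unfolding V_def by simp
    show "is_copy J F (Jv 0) (Fv 0)" unfolding is_copy_def Jv_def Fv_def using h by auto
    show "\<forall>v\<in>V - {0}. parity_constraint (Jv v) (Fv v)"
    proof
      fix v assume "v \<in> V - {0}"
      then have v: "v = 1" unfolding V_def by auto
      have fK: "finite K" unfolding K_def by simp
      have ce: "is_copy K (even_rel K) K (even_rel K)" unfolding is_copy_def
        by (rule exI[of _ id]) (auto simp: Int_absorb1)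
      have co: "is_copy K (odd_rel K) K (odd_rel K)" unfolding is_copy_def
        by (rule exI[of _ id]) (auto simp: Int_absorb1)
      show "parity_constraint (Jv v) (Fv v)" unfolding parity_constraint_def Jv_def Fv_def G1_def
        using v fK ce co by auto
    qed
  qed
  define Y where "Y = h ` y0"
  define x where "x = Y \<union> (\<lambda>i. n + i) ` Y \<union> {a}"
  have Yn: "Y \<subseteq> {0..<n}" unfolding Y_def using h y0 unfolding bij_betw_def by blast
  have x0: "x \<inter> Jv 0 = Y" unfolding x_def Jv_def a_def using Yn by auto
  have x1: "x \<inter> Jv 1 = (\<lambda>i. n + i) ` Y \<union> {a}" unfolding x_def Jv_def a_def K_def using Yn by auto
  have hy: "J \<inter> h -` Y = y0"
  proof -
    have inj: "inj_on h J" using h unfolding bij_betw_def by blast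
    show ?thesis unfolding Y_def using inj y0 by (auto simp: inj_on_def)
  qed
  have cY: "card Y = card y0"
    unfolding Y_def using h y0 by (meson bij_betw_def card_image inj_on_subset)
  have fY: "finite Y" using Yn finite_subset by blast
  have cx1: "card ((\<lambda>i. n + i) ` Y \<union> {a}) = card y0 + 1"
  proof -
    have "a \<notin> (\<lambda>i. n + i) ` Y" using Yn unfolding a_def by auto
    moreover have "card ((\<lambda>i. n + i) ` Y) = card Y" by (rule card_image) (simp add: inj_on_def)
    ultimately show ?thesis using fY cY by simp
  qed
  have sub1: "(\<lambda>i. n + i) ` Y \<union> {a} \<subseteq> K" unfolding K_def a_def using Yn by auto
  have t0: "Fv 0 (x \<inter> Jv 0) > 0" unfolding Fv_def x0 using Fy hy by simp
  have t1: "Fv 1 (x \<inter> Jv 1) = 1" unfolding Fv_def x1 G1_def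
    using cx1 sub1 by (simp add: even_rel_def odd_rel_def Int_absorb2)
  have nn: "Fv v z \<ge> 0" for v z
    unfolding Fv_def G1_def using Fnn by (simp add: even_rel_def odd_rel_def)
  have "circuit_value Jc V Jv {a} E Fv {a} > 0"
    unfolding circuit_value_def
  proof (rule sum_pos2)
    show "finite {x'. x' \<subseteq> Jc \<and> x' \<inter> {a} = {a} \<and> (\<forall>e\<in>E. e \<subseteq> x' \<or> e \<inter> x' = {})}"
      by (rule finite_subset[of _ "Pow Jc"]) (auto simp: Jc_def)
    show "x \<in> {x'. x' \<subseteq> Jc \<and> x' \<inter> {a} = {a} \<and> (\<forall>e\<in>E. e \<subseteq> x' \<or> e \<inter> x' = {})}"
    proof (intro CollectI conjI)
      show "x \<subseteq> Jc" unfolding x_def Jc_def a_def using Yn by auto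
      show "x \<inter> {a} = {a}" unfolding x_def by auto
      show "\<forall>e\<in>E. e \<subseteq> x \<or> e \<inter> x = {}"
      proof
        fix e assume "e \<in> E"
        then obtain i where i: "i < n" "e = {i, n + i}" unfolding E_def by auto
        have "i \<in> x \<longleftrightarrow> i \<in> Y" unfolding x_def a_def using i(1) by auto
        moreover have "n + i \<in> x \<longleftrightarrow> i \<in> Y" unfolding x_def a_def using i(1) Yn by auto
        ultimately show "e \<subseteq> x \<or> e \<inter> x = {}" using i(2) by auto
      qed
    qed
    show "0 < (\<Prod>v\<in>V. Fv v (x \<inter> Jv v))" unfolding V_def using t0 t1 by simp
    show "\<And>i. i \<in> {x'. x' \<subseteq> Jc \<and> x' \<inter> {a} = {a} \<and> (\<forall>e\<in>E. e \<subseteq> x' \<or> e \<inter> x' = {})} \<Longrightarrow>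
         0 \<le> (\<Prod>v\<in>V. Fv v (i \<inter> Jv v))"
      using nn by (simp add: prod_nonneg)
  qed
  then show ?thesis using pc by blast
qed


theorem lemma13:
  fixes J :: "'a set"
  assumes "finite J"
  shows "strictly_terraced J (even_rel J) \<and> strictly_terraced J (odd_rel J) \<and>
         strictly_terraced J (nae_rel J) \<and>
         Prat J (even_rel J) = 0 \<and> Prat J (odd_rel J) = 0 \<and> Prat J (nae_rel J) \<le> 3"
proof -
  have pe: "Prat J (even_rel J) = 0"
  proof (rule prat_par)
    show "\<forall>(K'::nat set) G. is_copy J (even_rel J) K' G \<longrightarrow> parity_like K' G"
      using copy_even by blast
    show "\<exists>Jc V Jv a E Fv. parity_circuit J (even_rel J) Jc V Jv {a} E Fv \<and> circuit_value Jc V Jv {a} E Fv {a} > 0"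
      by (rule construct[OF assms, of "{}"]) (auto simp: even_rel_def)
    show "\<not> (\<forall>x. x \<subseteq> J \<longrightarrow> even_rel J x = 0)"
      by (auto simp: even_rel_def intro!: exI[of _ "{}"])
  qed
  have po: "Prat J (odd_rel J) = 0"
  proof (cases "J = {}")
    case True
    then show ?thesis unfolding Prat_def by (simp add: odd_rel_def)
  next
    case False
    then obtain j where j: "j \<in> J" by blast
    have o1: "odd_rel J {j} = 1" using j by (simp add: odd_rel_def)
    show ?thesis
    proof (rule prat_par)
      show "\<forall>(K'::nat set) G. is_copy J (odd_rel J) K' G \<longrightarrow> parity_like K' G"
        using copy_odd by blast
      show "\<exists>Jc V Jv a E Fv. parity_circuit J (odd_rel J) Jc V Jv {a} E Fv \<and> circuit_value Jc V Jv {a} E Fv {a} > 0"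
        by (rule construct[OF assms, of "{j}"]) (use j o1 in \<open>auto simp: odd_rel_def\<close>)
      show "\<not> (\<forall>x. x \<subseteq> J \<longrightarrow> odd_rel J x = 0)"
        using j o1 by (metis empty_subsetI insert_subset zero_neq_one)
    qed
  qed
  show ?thesis using st_even[OF assms] st_odd[OF assms] st_nae[OF assms] pe po prat_nae[OF assms]
    by blast
qed

end
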